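(* For every $n\ge1$, the star graph $G=K_{1,n-1}$ on $n$ vertices satisfies $$a_0(G)<a_1(G)<\cdots<a_{\lfloor\frac{n-1}{2}\rfloor}(G);$$ in particular its $a$-sequence satisfies the tail-peaked condition.
   Context: All graphs are finite simple graphs; $G|_I$ is the induced subgraph on $I\subseteq V(G)$. The signed $a$-number: $sa(\emptyset)=1$; if $G$ has connected components $G_1,\dots,G_\ell$, $sa(G)=\prod_k sa(G_k)$; if $G$ is connected and nonempty, $sa(G)=-\sum_{I\subsetneq V(G)}sa(G|_I)$ when $|V(G)|$ is even and $0$ when odd. $a(G)=|sa(G)|$, $a_i(G)=\sum_{I\subseteq V(G),|I|=2i}a(G|_I)$, and the $a$-sequence is $(a_0(G),a_1(G),\dots)$. A sequence satisfies the tail-peaked condition if it is eventually zero and is (weakly) increasing up to and including its second-to-last nonzero term. The star graph $K_{1,m}$ has one center vertex adjacent to each of $m$ leaves and no other edges. *)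

theory Defs
  imports Main
begin

text \<open>A finite simple graph is given by a finite vertex set V and an adjacency relation
  E (symmetric, irreflexive on V).  The induced subgraph on I has vertex set I and the
  edges of E between vertices of I; so a (vertex set, adjacency) pair (I, E) with I a
  finite subset of V represents the induced subgraph G|_I.\<close>

definition edges_on :: "('a \<Rightarrow> 'a \<Rightarrow> bool) \<Rightarrow> 'a set \<Rightarrow> ('a \<times> 'a) set" where
  "edges_on E I = {(u, v). u \<in> I \<and> v \<in> I \<and> (E u v \<or> E v u)}"

definition connected_on :: "('a \<Rightarrow> 'a \<Rightarrow> bool) \<Rightarrow> 'a set \<Rightarrow> bool" where
  "connected_on E I \<longleftrightarrow> I \<noteq> {} \<and> (\<forall>x\<in>I. \<forall>y\<in>I. (x, y) \<in> (edges_on E I)\<^sup>*)"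

definition components :: "('a \<Rightarrow> 'a \<Rightarrow> bool) \<Rightarrow> 'a set \<Rightarrow> 'a set set" where
  "components E I = {{y \<in> I. (x, y) \<in> (edges_on E I)\<^sup>*} | x. x \<in> I}"

lemma component_proper:
  assumes "I \<noteq> {}" "\<not> connected_on E I" "C \<in> components E I"
  shows "C \<subset> I"
proof -
  obtain z where z: "z \<in> I" "C = {y \<in> I. (z, y) \<in> (edges_on E I)\<^sup>*}"
    using assms(3) unfolding components_def by blast
  have sym: "sym ((edges_on E I)\<^sup>*)"
    by (rule sym_rtrancl) (auto simp: sym_def edges_on_def)
  show ?thesis
  proof (rule ccontr)
    assume "\<not> C \<subset> I"
    then have "C = I" using z by blast
    then have "\<forall>y\<in>I. (z, y) \<in> (edges_on E I)\<^sup>*" using z by blast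
    then have "\<forall>x\<in>I. \<forall>y\<in>I. (x, y) \<in> (edges_on E I)\<^sup>*"
      using sym by (meson rtrancl_trans symD)
    then show False using assms(1,2) unfolding connected_on_def by blast
  qed
qed

text \<open>The signed a-number sa(G|_I).  (Infinite vertex sets do not occur; the value 0
  there is a dummy.)\<close>
function sa :: "('a \<Rightarrow> 'a \<Rightarrow> bool) \<Rightarrow> 'a set \<Rightarrow> int" where
  "sa E I =
     (if infinite I then 0
      else if I = {} then 1
      else if connected_on E I then
        (if even (card I) then - (\<Sum>J\<in>{J. J \<subset> I}. sa E J) else 0)
      else (\<Prod>C\<in>components E I. sa E C))"
  by pat_completeness auto
termination
proof (relation "measure (\<lambda>(E, I). card I)")
  show "wf (measure (\<lambda>(E, I). card I))" by simp
next
  fix E :: "'a \<Rightarrow> 'a \<Rightarrow> bool" and I J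
  assume "\<not> infinite I" "J \<in> {J. J \<subset> I}"
  then show "((E, J), E, I) \<in> measure (\<lambda>(E, I). card I)"
    by (simp add: psubset_card_mono)
next
  fix E :: "'a \<Rightarrow> 'a \<Rightarrow> bool" and I C
  assume "\<not> infinite I" "I \<noteq> {}" "\<not> connected_on E I" "C \<in> components E I"
  then show "((E, C), E, I) \<in> measure (\<lambda>(E, I). card I)"
    using component_proper[of I E C] by (simp add: psubset_card_mono)
qed

declare sa.simps [simp del]

definition a_num :: "('a \<Rightarrow> 'a \<Rightarrow> bool) \<Rightarrow> 'a set \<Rightarrow> nat" where
  "a_num E I = nat \<bar>sa E I\<bar>"

definition a_seq :: "'a set \<Rightarrow> ('a \<Rightarrow> 'a \<Rightarrow> bool) \<Rightarrow> nat \<Rightarrow> nat" where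
  "a_seq V E i = (\<Sum>I\<in>{I. I \<subseteq> V \<and> card I = 2 * i}. a_num E I)"

text \<open>Tail-peaked: eventually zero, and weakly increasing up to and including the
  second-to-last nonzero term.\<close>
definition tail_peaked :: "(nat \<Rightarrow> nat) \<Rightarrow> bool" where
  "tail_peaked f \<longleftrightarrow> (\<exists>N. \<forall>m\<ge>N. f m = 0) \<and>
     (\<forall>i j p q. i \<le> j \<and> j \<le> p \<and> p < q \<and> f p \<noteq> 0 \<and> f q \<noteq> 0 \<longrightarrow> f i \<le> f j)"

definition star_vertices :: "nat \<Rightarrow> nat set" where
  "star_vertices n = {0..<n}"

definition star_adj :: "nat \<Rightarrow> nat \<Rightarrow> bool" where
  "star_adj u v \<longleftrightarrow> u \<noteq> v \<and> (u = 0 \<or> v = 0)"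

end

theory Submission
  imports Defs "HOL-Computational_Algebra.Formal_Power_Series"
begin
unbundle fps_syntax

fun bt :: "nat \<Rightarrow> real" where
  "bt 0 = 0"
| "bt (Suc 0) = 1"
| "bt (Suc (Suc n)) = (\<Sum>k\<le>Suc n. bt k * bt (Suc n - k)) / (n + 2)"

fun ct :: "nat \<Rightarrow> real" where
  "ct 0 = 0"
| "ct (Suc 0) = 1"
| "ct (Suc (Suc n)) = - (\<Sum>k\<le>Suc n. ct k * ct (Suc n - k)) / (n + 2)"

lemma bt_nonneg: "bt n \<ge> 0"
proof (induction n rule: less_induct)
  case (less n)
  show ?case
  proof (cases n rule: bt.cases)
    case (3 m)
    have "(\<Sum>k\<le>Suc m. bt k * bt (Suc m - k)) \<ge> 0"
      by (intro sum_nonneg mult_nonneg_nonneg) (use less 3 in auto)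
    then show ?thesis using 3 by simp
  qed auto
qed

lemma bt_even: "even n \<Longrightarrow> bt n = 0"
proof (induction n rule: less_induct)
  case (less n)
  show ?case
  proof (cases n rule: bt.cases)
    case (3 m)
    have "bt k * bt (Suc m - k) = 0" if "k \<le> Suc m" for k
    proof (cases "even k")
      case True then show ?thesis using less 3 that by simp
    next
      case False
      then have "even (Suc m - k)" using less.prems 3 that by auto
      then show ?thesis using less 3 that by simp
    qed
    then have S0: "(\<Sum>k\<le>Suc m. bt k * bt (Suc m - k)) = 0" by (intro sum.neutral) auto
    show ?thesis using 3 by (simp only: bt.simps S0)
  qed (use less in auto)
qed

lemma bt_pos: "odd n \<Longrightarrow> bt n > 0"
proof (induction n rule: less_induct)
  case (less n)
  show ?case
  proof (cases n rule: bt.cases)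
    case (3 m)
    have "bt 1 * bt (Suc m - 1) \<le> (\<Sum>k\<le>Suc m. bt k * bt (Suc m - k))"
      by (rule member_le_sum) (auto intro: mult_nonneg_nonneg bt_nonneg)
    moreover have "bt 1 * bt (Suc m - 1) > 0" using less 3 by simp
    ultimately show ?thesis using 3 by simp
  qed (use less in auto)
qed

lemma bt_rec: "bt (Suc (Suc n)) * (real n + 2) = (\<Sum>k\<le>Suc n. bt k * bt (Suc n - k))"
proof -
  have "bt (Suc (Suc n)) = (\<Sum>k\<le>Suc n. bt k * bt (Suc n - k)) / (real n + 2)"
    by (simp only: bt.simps) simp
  then show ?thesis by (simp add: field_simps)
qed

lemma sum3: "(\<Sum>j\<le>Suc (Suc (Suc p)). f j) = (\<Sum>j\<le>Suc p. f j) + f (Suc (Suc p)) + f (Suc(Suc(Suc p)))"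
  by simp

lemma ratio_aux:
  fixes X Y :: real and p :: nat
  assumes "Y * (p + 4) \<ge> X * (p + 2) / 3 + X" "X \<ge> 0"
  shows "X \<le> 3 * Y"
proof -
  have h: "X + (X * real p + X * 2) / 3 \<le> Y * real p + Y * 4" using assms(1) by (simp add: algebra_simps)
  have "X * (p + 4) \<le> (3 * Y) * (p + 4)" 
  proof -
    define A where "A = X * real p"
    define B where "B = Y * real p"
    have "X + (A + X * 2) / 3 \<le> B + Y * 4" using h by (simp add: A_def B_def)
    then have "A + 4 * X \<le> 3 * B + 12 * Y" using assms(2) by (simp add: field_simps)
    then have "X * real p + 4 * X \<le> 3 * (Y * real p) + 12 * Y" by (simp add: A_def B_def)
    then show ?thesis by (simp add: algebra_simps)
  qed
  then show ?thesis by (rule mult_right_le_imp_le) simp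
qed

lemma bt_ratio: "bt n \<le> 3 * bt (n + 2)"
proof (induction n rule: less_induct)
  case (less n)
  show ?case
  proof (cases n rule: bt.cases)
    case 1 then show ?thesis by (simp add: bt_nonneg)
  next
    case 2 then show ?thesis by (simp add: numeral_eq_Suc)
  next
    case (3 p)
    have e1: "bt (Suc (Suc p)) * (p + 2) = (\<Sum>j\<le>Suc p. bt j * bt (Suc p - j))"
      by simp
    have "bt (Suc (Suc (Suc (Suc p)))) * (p + 4) = (\<Sum>j\<le>Suc (Suc (Suc p)). bt j * bt (Suc (Suc (Suc p)) - j))"
      using bt_rec[of "Suc (Suc p)"] by (simp add: add.commute)
    also have "\<dots> = (\<Sum>j\<le>Suc p. bt j * bt (Suc (Suc (Suc p)) - j)) + bt (Suc (Suc p))"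
      using sum3[of "\<lambda>j. bt j * bt (Suc (Suc (Suc p)) - j)" p] by simp
    also have "\<dots> \<ge> (\<Sum>j\<le>Suc p. bt j * bt (Suc p - j)) / 3 + bt (Suc (Suc p))"
    proof -
      have "(\<Sum>j\<le>Suc p. bt j * bt (Suc p - j)) / 3 = (\<Sum>j\<le>Suc p. bt j * (bt (Suc p - j) / 3))"
        by (simp add: sum_divide_distrib)
      also have "\<dots> \<le> (\<Sum>j\<le>Suc p. bt j * bt (Suc (Suc (Suc p)) - j))"
      proof (rule sum_mono)
        fix j assume j: "j \<in> {..Suc p}"
        have a: "bt (Suc p - j) \<le> 3 * bt (Suc p - j + 2)" by (rule less.IH) (use 3 j in auto)
        have b: "Suc p - j + 2 = Suc (Suc (Suc p)) - j" using j by auto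
        from a have "bt (Suc p - j) \<le> 3 * bt (Suc (Suc (Suc p)) - j)" unfolding b .
        then have c: "bt (Suc p - j) / 3 \<le> bt (Suc (Suc (Suc p)) - j)" by linarith
        show "bt j * (bt (Suc p - j) / 3) \<le> bt j * bt (Suc (Suc (Suc p)) - j)"
          by (rule mult_left_mono[OF c bt_nonneg])
      qed
      finally show ?thesis by simp
    qed
    finally have "bt (Suc (Suc (Suc (Suc p)))) * (p + 4) \<ge> bt (Suc (Suc p)) * (p + 2) / 3 + bt (Suc (Suc p))"
      unfolding e1[symmetric] .
    from ratio_aux[OF this bt_nonneg] have "bt (Suc (Suc p)) \<le> 3 * bt (Suc (Suc (Suc (Suc p))))" by simp
    then show ?thesis using 3 by (simp only: add_2_eq_Suc')
  qed
qed

lemma ct_bt: "ct n = (-1) ^ (n div 2) * bt n"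
proof (induction n rule: less_induct)
  case (less n)
  show ?case
  proof (cases n rule: bt.cases)
    case (3 m)
    have "ct k * ct (Suc m - k) = (-1) ^ (m div 2) * (bt k * bt (Suc m - k))" if k: "k \<le> Suc m" for k
    proof (cases "odd k \<and> odd (Suc m - k)")
      case True
      then have "k div 2 + (Suc m - k) div 2 = m div 2" using k by presburger
      then show ?thesis using less 3 k by (simp add: power_add[symmetric])
    next
      case False
      then show ?thesis using less 3 k by (auto simp: bt_even)
    qed
    then have "(\<Sum>k\<le>Suc m. ct k * ct (Suc m - k)) = (-1) ^ (m div 2) * (\<Sum>k\<le>Suc m. bt k * bt (Suc m - k))"
      by (simp add: sum_distrib_left)
    then show ?thesis using 3 by simp
  qed auto
qed

definition Ch :: "real fps" where "Ch = Abs_fps (\<lambda>n. if even n then 1 / fact n else 0)"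
definition Sh :: "real fps" where "Sh = Abs_fps (\<lambda>n. if odd n then 1 / fact n else 0)"
definition CT :: "real fps" where "CT = Abs_fps ct"

lemma factq: "real (Suc n) * (1 / fact (Suc n)) = 1 / fact n"
  by (simp add: fact_Suc)

lemma dCh: "fps_deriv Ch = Sh"
  by (rule fps_ext) (auto simp: Ch_def Sh_def factq simp del: of_nat_Suc)
lemma dSh: "fps_deriv Sh = Ch"
  by (rule fps_ext) (auto simp: Ch_def Sh_def factq simp del: of_nat_Suc)
lemma dCT: "fps_deriv CT = 1 - CT * CT"
proof (rule fps_ext)
  fix n
  show "fps_deriv CT $ n = (1 - CT * CT) $ n"
  proof (cases n)
    case 0 then show ?thesis by (simp add: CT_def fps_mult_nth)
  next
    case (Suc m)
    then show ?thesis by (simp add: CT_def fps_mult_nth atLeast0AtMost field_simps)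
  qed
qed

lemma key_fps: "Ch * CT = Sh"
proof -
  define D where "D = Ch * CT - Sh"
  have dD: "fps_deriv D = - CT * D"
    unfolding D_def by (simp add: dCh dSh dCT algebra_simps)
  have "D $ n = 0" for n
  proof (induction n rule: less_induct)
    case (less n)
    show ?case
    proof (cases n)
      case 0 then show ?thesis by (simp add: D_def Ch_def Sh_def CT_def)
    next
      case (Suc m)
      have "fps_deriv D $ m = 0" unfolding dD using less Suc
        by (simp add: fps_mult_nth)
      then show ?thesis using Suc by simp
    qed
  qed
  then have "D = 0" by (intro fps_ext) simp
  then show ?thesis unfolding D_def by simp
qed

definition sv :: "nat \<Rightarrow> real" where "sv k = (if odd k then - (fact k * ct k) else 0)"

lemma sv_identity:
  assumes "odd k"
  shows "(\<Sum>j\<le>k. real (k choose j) * sv j) = -1"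
proof -
  have "(CT * Ch) $ k = Sh $ k" using key_fps by (simp add: mult.commute)
  then have e: "(\<Sum>i=0..k. ct i * (if even (k - i) then 1 / fact (k - i) else 0)) = 1 / fact k"
    using assms by (simp add: fps_mult_nth CT_def Ch_def Sh_def)
  have "(\<Sum>j\<le>k. real (k choose j) * sv j) = - fact k * (\<Sum>i=0..k. ct i * (if even (k - i) then 1 / fact (k - i) else 0))"
    unfolding sum_distrib_left atLeast0AtMost
  proof (rule sum.cong)
    fix j assume j: "j \<in> {..k}"
    have "odd j \<longleftrightarrow> even (k - j)" using assms j by auto
    then show "real (k choose j) * sv j = - fact k * (ct j * (if even (k - j) then 1 / fact (k - j) else 0))"
      using j by (auto simp: sv_def binomial_fact field_simps)
  qed simp
  also have "\<dots> = -1" using e by simp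
  finally show ?thesis .
qed


lemma edges_no0: "0 \<notin> I \<Longrightarrow> edges_on star_adj I = {}"
  unfolding edges_on_def star_adj_def by (auto intro!: gr0I)

lemma sa_single: "sa E {x} = 0"
proof -
  have "connected_on E {x}" unfolding connected_on_def by auto
  then show ?thesis by (simp add: sa.simps[of E "{x}"])
qed

lemma sa_no0:
  assumes "finite I" "I \<noteq> {}" "0 \<notin> I"
  shows "sa star_adj I = 0"
proof -
  have E: "edges_on star_adj I = {}" using assms(3) by (rule edges_no0)
  obtain x where x: "x \<in> I" using assms(2) by blast
  show ?thesis
  proof (cases "connected_on star_adj I")
    case True
    then have "I = {x}" using x E unfolding connected_on_def by auto
    then show ?thesis by (simp add: sa_single)
  next
    case False
    have comp: "components star_adj I = (\<lambda>x. {x}) ` I"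
      unfolding components_def E by auto
    have "(\<Prod>C\<in>components star_adj I. sa star_adj C) = 0"
      unfolding comp using assms(1) x by (intro prod_zero) (auto simp: sa_single)
    then show ?thesis using False assms by (simp add: sa.simps[of _ I])
  qed
qed

lemma conn0:
  assumes "(0::nat) \<in> I"
  shows "connected_on star_adj I"
proof -
  have r: "(x, 0) \<in> (edges_on star_adj I)\<^sup>*" "(0, x) \<in> (edges_on star_adj I)\<^sup>*" if "x \<in> I" for x
  proof -
    show "(x, 0) \<in> (edges_on star_adj I)\<^sup>*"
    proof (cases "x = 0")
      case False
      then have "(x, 0) \<in> edges_on star_adj I" using that assms
        unfolding edges_on_def star_adj_def by (auto intro!: gr0I)
      then show ?thesis by auto
    qed simp
    show "(0, x) \<in> (edges_on star_adj I)\<^sup>*"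
    proof (cases "x = 0")
      case False
      then have "(0, x) \<in> edges_on star_adj I" using that assms
        unfolding edges_on_def star_adj_def by (auto intro!: gr0I)
      then show ?thesis by auto
    qed simp
  qed
  show ?thesis unfolding connected_on_def
    using assms r by (blast intro: rtrancl_trans)
qed

lemma pow_card_sum:
  fixes h :: "nat \<Rightarrow> real"
  assumes "finite L"
  shows "(\<Sum>J\<in>Pow L. h (card J)) = (\<Sum>j\<le>card L. real (card L choose j) * h j)"
proof -
  have "(\<Sum>J\<in>Pow L. h (card J)) = (\<Sum>j\<le>card L. \<Sum>J\<in>{J. J \<in> Pow L \<and> card J = j}. h (card J))"
    by (rule sum.group[symmetric]) (use assms in \<open>auto intro: card_mono\<close>)
  also have "\<dots> = (\<Sum>j\<le>card L. real (card L choose j) * h j)"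
  proof (rule sum.cong)
    fix j
    have "(\<Sum>J\<in>{J. J \<in> Pow L \<and> card J = j}. h (card J)) = (\<Sum>J\<in>{J. J \<subseteq> L \<and> card J = j}. h j)"
      by (rule sum.cong) auto
    also have "\<dots> = real (card L choose j) * h j" using n_subsets[OF assms, of j] by simp
    finally show "(\<Sum>J\<in>{J. J \<in> Pow L \<and> card J = j}. h (card J)) = real (card L choose j) * h j" .
  qed simp
  finally show ?thesis .
qed

lemma sa_main:
  "finite I \<Longrightarrow> (0::nat) \<in> I \<Longrightarrow> real_of_int (sa star_adj I) = sv (card I - 1)"
proof (induction "card I" arbitrary: I rule: less_induct)
  case less
  define L where "L = I - {0}"
  define k where "k = card I - 1"
  have fL: "finite L" using less.prems unfolding L_def by auto
  have cL: "card L = k" unfolding L_def k_def using less.prems by simp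
  have "card I > 0" using less.prems by (auto simp: card_gt_0_iff)
  then have cI: "card I = Suc k" unfolding k_def by simp
  have I0: "I \<noteq> {}" using less.prems by auto
  have saI: "sa star_adj I = (if even (card I) then - (\<Sum>J\<in>{J. J \<subset> I}. sa star_adj J) else 0)"
    using less.prems I0 conn0[of I] by (simp add: sa.simps[of _ I])
  show ?case
  proof (cases "even (card I)")
    case False
    then have "even k" using cI by simp
    then show ?thesis using saI False unfolding k_def[symmetric] by (simp add: sv_def)
  next
    case True
    then have ok: "odd k" using cI by simp
    have split: "{J. J \<subset> I} = Pow L \<union> insert 0 ` {J. J \<subset> L}"
    proof (rule set_eqI, rule iffI)
      fix J assume "J \<in> {J. J \<subset> I}"
      then have J: "J \<subset> I" by simp
      show "J \<in> Pow L \<union> insert 0 ` {J. J \<subset> L}"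
      proof (cases "0 \<in> J")
        case True
        then have "J = insert 0 (J - {0})" "J - {0} \<subset> L" using J unfolding L_def by auto
        then show ?thesis by blast
      next
        case False then show ?thesis using J unfolding L_def by auto
      qed
    next
      fix J assume "J \<in> Pow L \<union> insert 0 ` {J. J \<subset> L}"
      then show "J \<in> {J. J \<subset> I}" using less.prems unfolding L_def by auto
    qed
    have L0: "0 \<notin> L" unfolding L_def by simp
    have disj: "Pow L \<inter> insert 0 ` {J. J \<subset> L} = {}" using L0 by blast
    have inj: "inj_on (insert 0) {J. J \<subset> L}"
    proof (rule inj_onI)
      fix x y assume "x \<in> {J. J \<subset> L}" "y \<in> {J. J \<subset> L}" "insert 0 x = insert 0 y"
      then show "x = y" using L0 insert_ident[of 0 x y] by blast
    qed
    have "{J. J \<subset> L} \<subseteq> Pow L" by blast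
    then have finP: "finite {J. J \<subset> L}" using fL by (metis finite_Pow_iff finite_subset)
    then have fin2: "finite (insert 0 ` {J. J \<subset> L})" by simp
    have s1: "(\<Sum>J\<in>Pow L. real_of_int (sa star_adj J)) = 1"
    proof -
      have "(\<Sum>J\<in>Pow L. real_of_int (sa star_adj J)) = real_of_int (sa star_adj {}) + (\<Sum>J\<in>Pow L - {{}}. real_of_int (sa star_adj J))"
        using fL by (subst sum.remove[of _ "{}"]) auto
      also have "(\<Sum>J\<in>Pow L - {{}}. real_of_int (sa star_adj J)) = 0"
      proof (rule sum.neutral, rule ballI)
        fix J assume J: "J \<in> Pow L - {{}}"
        then have "finite J" "J \<noteq> {}" "0 \<notin> J" using fL unfolding L_def by (auto dest: finite_subset)
        then show "real_of_int (sa star_adj J) = 0" by (simp add: sa_no0)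
      qed
      finally show ?thesis by (simp add: sa.simps[of _ "{}"])
    qed
    have s2: "(\<Sum>J\<in>insert 0 ` {J. J \<subset> L}. real_of_int (sa star_adj J)) = -1 - sv k"
    proof -
      have "(\<Sum>J\<in>insert 0 ` {J. J \<subset> L}. real_of_int (sa star_adj J))
          = (\<Sum>J\<in>{J. J \<subset> L}. real_of_int (sa star_adj (insert 0 J)))"
        by (rule sum.reindex[OF inj, unfolded comp_def])
      also have "\<dots> = (\<Sum>J\<in>{J. J \<subset> L}. sv (card J))"
      proof (rule sum.cong)
        fix J assume J: "J \<in> {J. J \<subset> L}"
        have fJ: "finite J" using J fL by (auto dest: finite_subset)
        have J0: "0 \<notin> J" using J unfolding L_def by auto
        have "card J < card L" using J fL by (simp add: psubset_card_mono)
        then have lt: "card (insert 0 J) < card I" using fJ J0 cL cI by simp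
        have "real_of_int (sa star_adj (insert 0 J)) = sv (card (insert 0 J) - 1)"
          by (rule less.hyps[OF lt]) (use fJ in auto)
        then show "real_of_int (sa star_adj (insert 0 J)) = sv (card J)" using fJ J0 by simp
      qed simp
      also have "\<dots> = (\<Sum>J\<in>Pow L. sv (card J)) - sv (card L)"
      proof -
        have "Pow L = insert L {J. J \<subset> L}" by auto
        then have "(\<Sum>J\<in>Pow L. sv (card J)) = sv (card L) + (\<Sum>J\<in>{J. J \<subset> L}. sv (card J))"
          using finP by simp
        then show ?thesis by simp
      qed
      also have "\<dots> = (\<Sum>j\<le>k. real (k choose j) * sv j) - sv k"
        using pow_card_sum[OF fL, of sv] cL by simp
      also have "\<dots> = -1 - sv k" using sv_identity[OF ok] by simp
      finally show ?thesis .
    qed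
    have "real_of_int (sa star_adj I) = - (\<Sum>J\<in>{J. J \<subset> I}. real_of_int (sa star_adj J))"
      using saI True by simp
    also have "\<dots> = - ((\<Sum>J\<in>Pow L. real_of_int (sa star_adj J)) + (\<Sum>J\<in>insert 0 ` {J. J \<subset> L}. real_of_int (sa star_adj J)))"
      unfolding split by (rule arg_cong[where f=uminus], rule sum.union_disjoint) (use fL fin2 disj in auto)
    also have "\<dots> = sv k" using s1 s2 by simp
    finally show ?thesis unfolding k_def .
  qed
qed


lemma abs_sv: "\<bar>sv k\<bar> = (if odd k then fact k * bt k else 0)"
  using bt_nonneg[of k] by (simp add: sv_def ct_bt abs_mult)

lemma a_num0:
  assumes "finite I" "(0::nat) \<in> I"
  shows "real (a_num star_adj I) = (if odd (card I - 1) then fact (card I - 1) * bt (card I - 1) else 0)"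
proof -
  have "real (a_num star_adj I) = \<bar>real_of_int (sa star_adj I)\<bar>"
    unfolding a_num_def by simp
  also have "\<dots> = \<bar>sv (card I - 1)\<bar>" using sa_main[OF assms] by simp
  finally show ?thesis using abs_sv by simp
qed

lemma a_seq0: "a_seq (star_vertices n) star_adj 0 = 1"
proof -
  have "{I. I \<subseteq> star_vertices n \<and> card I = 2 * 0} = {{}}"
    by (auto simp: star_vertices_def dest: finite_subset)
  then show ?thesis unfolding a_seq_def by (simp add: a_num_def sa.simps[of _ "{}"])
qed

lemma a_seq_pos:
  assumes "i \<ge> 1"
  shows "real (a_seq (star_vertices n) star_adj i) = real ((n - 1) choose (2 * i - 1)) * (fact (2 * i - 1) * bt (2 * i - 1))"
proof -
  define V where "V = star_vertices n"
  define S where "S = {I. I \<subseteq> V \<and> card I = 2 * i}"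
  define K where "K = fact (2 * i - 1) * bt (2 * i - 1)"
  have fV: "finite V" unfolding V_def star_vertices_def by simp
  have "S \<subseteq> Pow V" unfolding S_def by auto
  then have fS: "finite S" using fV by (metis finite_Pow_iff finite_subset)
  have "real (a_seq V star_adj i) = (\<Sum>I\<in>S. real (a_num star_adj I))"
    unfolding a_seq_def S_def by simp
  also have "\<dots> = (\<Sum>I\<in>S. if 0 \<in> I then K else 0)"
  proof (rule sum.cong)
    fix I assume I: "I \<in> S"
    then have fI: "finite I" and cI: "card I = 2 * i" using fV unfolding S_def by (auto dest: finite_subset)
    show "real (a_num star_adj I) = (if 0 \<in> I then K else 0)"
    proof (cases "0 \<in> I")
      case True
      have "odd (card I - 1)" using cI assms by simp
      then show ?thesis using a_num0[OF fI True] True cI unfolding K_def by simp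
    next
      case False
      have "I \<noteq> {}" using cI assms by auto
      then have "sa star_adj I = 0" using sa_no0[OF fI _ False] by simp
      then show ?thesis using False by (simp add: a_num_def)
    qed
  qed simp
  also have "\<dots> = K * card {I\<in>S. 0 \<in> I}"
    using fS by (simp add: sum.If_cases Int_def)
  also have "card {I\<in>S. 0 \<in> I} = (n - 1) choose (2 * i - 1)"
  proof -
    have eq: "{I\<in>S. 0 \<in> I} = insert 0 ` {J. J \<subseteq> V - {0} \<and> card J = 2 * i - 1}"
    proof (rule set_eqI, rule iffI)
      fix I assume I: "I \<in> {I\<in>S. 0 \<in> I}"
      then have fI: "finite I" using fV unfolding S_def by (auto dest: finite_subset)
      have "I = insert 0 (I - {0})" using I by auto
      moreover have "I - {0} \<subseteq> V - {0}" "card (I - {0}) = 2 * i - 1"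
        using I fI unfolding S_def by auto
      ultimately show "I \<in> insert 0 ` {J. J \<subseteq> V - {0} \<and> card J = 2 * i - 1}" by blast
    next
      fix I assume "I \<in> insert 0 ` {J. J \<subseteq> V - {0} \<and> card J = 2 * i - 1}"
      then obtain J where J: "J \<subseteq> V - {0}" "card J = 2 * i - 1" and IJ: "I = insert 0 J" by blast
      have fJ: "finite J" using J fV by (auto dest: finite_subset)
      have "0 \<notin> J" using J by auto
      then have "card I = 2 * i" using IJ fJ J assms by simp
      moreover have "0 \<in> V"
      proof -
        have "J \<noteq> {}" using J assms by auto
        then obtain x where "x \<in> J" by blast
        then show ?thesis using J unfolding V_def star_vertices_def by auto
      qed
      ultimately show "I \<in> {I\<in>S. 0 \<in> I}" using IJ J unfolding S_def by auto
    qed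
    have inj: "inj_on (insert 0) {J. J \<subseteq> V - {0} \<and> card J = 2 * i - 1}"
    proof (rule inj_onI)
      fix x y assume "x \<in> {J. J \<subseteq> V - {0} \<and> card J = 2 * i - 1}" "y \<in> {J. J \<subseteq> V - {0} \<and> card J = 2 * i - 1}" "insert 0 x = insert 0 y"
      then show "x = y" using insert_ident[of 0 x y] by blast
    qed
    have "card (V - {0}) = n - 1" unfolding V_def star_vertices_def by (cases n) auto
    then show ?thesis unfolding eq card_image[OF inj] using n_subsets[of "V - {0}"] fV by simp
  qed
  finally show ?thesis unfolding V_def K_def by (simp add: mult.commute)
qed


declare bt.simps(3)[simp del] ct.simps(3)[simp del]

lemma ff:
  assumes "r + 2 \<le> m"
  shows "real (m choose (r + 2)) * fact (r + 2) = real (m choose r) * fact r * (real (m - r) * real (m - r - 1))"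
proof -
  define d where "d = m - (r + 2)"
  have mr: "m - r = d + 2" using assms d_def by simp
  have b1: "real (m choose (r + 2)) = fact m / (fact (r + 2) * fact d)"
    unfolding d_def by (rule binomial_fact[OF assms])
  have b2: "real (m choose r) = fact m / (fact r * fact (d + 2))"
    using binomial_fact[of r m] assms mr by simp
  have f1: "fact (r + 2) = (real r + 2) * (real r + 1) * (fact r :: real)"
    by (simp add: fact_Suc numeral_eq_Suc algebra_simps)
  have f2: "fact (d + 2) = (real d + 2) * (real d + 1) * (fact d :: real)"
    by (simp add: fact_Suc numeral_eq_Suc algebra_simps)
  have e: "real (m - r) = real d + 2" "real (m - r - 1) = real d + 1" using mr by auto
  have L: "real (m choose (r + 2)) * fact (r + 2) = fact m / fact d"
    using b1 by simp
  define Q where "Q = (real d + 2) * (real d + 1)"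
  have Qp: "Q > 0" unfolding Q_def by (intro mult_pos_pos) auto
  have "real (m choose r) * fact r * Q = fact m / (fact r * (Q * fact d)) * fact r * Q"
    unfolding b2 f2 Q_def ..
  also have "\<dots> = fact m / fact d" using Qp by (simp add: field_simps)
  finally have R: "real (m choose r) * fact r * ((real d + 2) * (real d + 1)) = fact m / fact d"
    unfolding Q_def .
  show ?thesis unfolding L e R ..
qed

lemma step:
  assumes "Suc i \<le> (n - 1) div 2"
  shows "a_seq (star_vertices n) star_adj i < a_seq (star_vertices n) star_adj (Suc i)"
proof (cases "i = 0")
  case True
  have "real (a_seq (star_vertices n) star_adj (Suc 0)) = real (n - 1)"
    using a_seq_pos[of 1 n] by simp
  moreover have "n - 1 \<ge> 2" using assms by auto
  ultimately have "a_seq (star_vertices n) star_adj (Suc 0) \<ge> 2" by linarith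
  then show ?thesis using True a_seq0 by simp
next
  case False
  define r where "r = 2 * i - 1"
  define m where "m = n - 1"
  have r2: "2 * Suc i - 1 = r + 2" using False unfolding r_def by simp
  have rm: "r + 3 \<le> m" using assms False unfolding r_def m_def by linarith
  define P where "P = real (m choose r) * fact r"
  have Ppos: "P > 0" unfolding P_def using rm by simp
  have bpos: "bt r > 0" using False unfolding r_def by (intro bt_pos) simp
  have A1: "real (a_seq (star_vertices n) star_adj i) = P * bt r"
    using a_seq_pos[of i n] False unfolding P_def r_def m_def by simp
  have "real (a_seq (star_vertices n) star_adj (Suc i)) = real (m choose (r + 2)) * fact (r + 2) * bt (r + 2)"
    using a_seq_pos[of "Suc i" n] unfolding r2 m_def by simp
  also have "\<dots> = P * (real (m - r) * real (m - r - 1)) * bt (r + 2)"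
  proof -
    have r2m: "r + 2 \<le> m" using rm by simp
    show ?thesis by (simp only: ff[OF r2m] P_def)
  qed
  finally have A2: "real (a_seq (star_vertices n) star_adj (Suc i)) = P * (real (m - r) * real (m - r - 1)) * bt (r + 2)" .
  have h6: "real (m - r) * real (m - r - 1) \<ge> 3 * 2"
    using rm by (intro mult_mono) auto
  have "(3 * 2) * bt (r + 2) \<le> (real (m - r) * real (m - r - 1)) * bt (r + 2)"
    by (rule mult_right_mono[OF h6 bt_nonneg])
  moreover have "3 * bt (r + 2) \<ge> bt r" by (rule bt_ratio)
  ultimately have "(real (m - r) * real (m - r - 1)) * bt (r + 2) \<ge> 2 * bt r"
    by linarith
  then have "P * ((real (m - r) * real (m - r - 1)) * bt (r + 2)) \<ge> P * (2 * bt r)"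
    using Ppos by (intro mult_left_mono) auto
  then have "real (a_seq (star_vertices n) star_adj (Suc i)) > real (a_seq (star_vertices n) star_adj i)"
  proof -
    have "P * bt r > 0" using Ppos bpos by simp
    moreover have "P * (2 * bt r) = 2 * (P * bt r)" by simp
    ultimately have "P * bt r < P * ((real (m - r) * real (m - r - 1)) * bt (r + 2))"
      using \<open>P * ((real (m - r) * real (m - r - 1)) * bt (r + 2)) \<ge> P * (2 * bt r)\<close> by linarith
    then show ?thesis unfolding A1 A2 by (simp only: mult.assoc)
  qed
  then show ?thesis by simp
qed

lemma strict:
  assumes "i < j" "j \<le> (n - 1) div 2"
  shows "a_seq (star_vertices n) star_adj i < a_seq (star_vertices n) star_adj j"
  using assms
proof (induction j)
  case 0 then show ?case by simp
next
  case (Suc j)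
  have st: "a_seq (star_vertices n) star_adj j < a_seq (star_vertices n) star_adj (Suc j)"
    using step Suc.prems by blast
  show ?case
  proof (cases "i = j")
    case True then show ?thesis using st by simp
  next
    case False
    then have "a_seq (star_vertices n) star_adj i < a_seq (star_vertices n) star_adj j"
      using Suc by simp
    then show ?thesis using st by simp
  qed
qed

theorem mainTheorem13:
  fixes n :: nat
  assumes "n \<ge> 1"
  shows "(\<forall>i j. i < j \<and> j \<le> (n - 1) div 2 \<longrightarrow>
            a_seq (star_vertices n) star_adj i < a_seq (star_vertices n) star_adj j)
         \<and> tail_peaked (a_seq (star_vertices n) star_adj)"
proof (intro conjI allI impI)
  fix i j assume "i < j \<and> j \<le> (n - 1) div 2"
  then show "a_seq (star_vertices n) star_adj i < a_seq (star_vertices n) star_adj j"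
    using strict by blast
next
  let ?A = "a_seq (star_vertices n) star_adj"
  have zero: "?A q = 0" if "q \<ge> 1" "2 * q - 1 > n - 1" for q
  proof -
    have "real (?A q) = 0" using a_seq_pos[of q n] that by simp
    then show ?thesis by simp
  qed
  have nz: "2 * q \<le> n" if "q \<ge> 1" "?A q \<noteq> 0" for q
    using zero[of q] that assms by (cases "2 * q - 1 > n - 1") auto
  show "tail_peaked ?A"
    unfolding tail_peaked_def
  proof (intro conjI exI allI impI)
    fix q assume "q \<ge> n"
    then show "?A q = 0" using assms by (intro zero) auto
  next
    fix i j p q assume h: "i \<le> j \<and> j \<le> p \<and> p < q \<and> ?A p \<noteq> 0 \<and> ?A q \<noteq> 0"
    then have "2 * q \<le> n" using nz[of q] by auto
    then have "j \<le> (n - 1) div 2" using h by linarith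
    then show "?A i \<le> ?A j" using h strict[of i j n] by (cases "i = j") auto
  qed
qed

end
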